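(* Let $C\in\mathbb R^{d\times d}$ satisfy Condition A and let $h(t):=\|e^{-Ct}\|_{\mathcal B(\mathbb R^d)}$. For each $m\ge1$ and each $D^{(m)}(0)\in F^{(m)}$, the solution $D^{(m)}(t)$ of $\dot D^{(m)}_\alpha=-\sum_{j,l=1}^d\alpha_jC_{jl}D^{(m)}_{(\alpha^{(j-)})^{(l+)}}$, $\alpha\in S^{(m)}$, satisfies $$\|D^{(m)}(t)\|_{\mathcal F}\le h(t)^m\|D^{(m)}(0)\|_{\mathcal F},\qquad t\ge0.$$ Moreover, $$\sup_{0\ne D^{(m)}(0)\in F^{(m)}}\frac{\|D^{(m)}(t)\|_{\mathcal F}}{\|D^{(m)}(0)\|_{\mathcal F}}=h(t)^m,\qquad t\ge 0.$$
   Context: $C_S=\frac12(C+C^T)$; Condition A: $C_S$ positive semi-definite and no non-trivial $C^T$-invariant subspace of $\ker C_S$. $\|e^{-Ct}\|_{\mathcal B(\mathbb R^d)}$ is the operator norm w.r.t. the Euclidean norm. $F^{(m)}$ is the space of symmetric $m$-tensors over $\mathbb R^d$ with Frobenius norm $\|A\|_{\mathcal F}=(\sum_{i_1,\dots,i_m=1}^dA_{i_1\dots i_m}^2)^{1/2}$. $S^{(m)}=\{\alpha\in\mathbb N_0^d:|\alpha|=m\}$; for $A\in F^{(m)}$, $A_\alpha:=A_{i_1\dots i_m}$ for any index with $\#\{r:i_r=k\}=\alpha_k$ for all $k$. $\alpha^{(l\pm)}_j=\alpha_j$ ($j\ne l$), $\alpha^{(l\pm)}_l=(\alpha_l\pm1)_+$.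 (This tensor ODE is the evolution of the rescaled Hermite coefficients $d_\alpha/\gamma_\alpha$, $\gamma_\alpha=m!/\alpha!$, of solutions of the Fokker–Planck equation $\partial_tf=\mathrm{div}_x(C_S\nabla_xf+Cxf)$.) *)

theory Defs
  imports "HOL-Analysis.Analysis" "HOL-Library.Multiset"
begin

(* Matrices are real^'n^'n; d = CARD('n). *)

primrec mat_pow :: "real^'n^'n \<Rightarrow> nat \<Rightarrow> real^'n^'n" where
  "mat_pow M 0 = mat 1"
| "mat_pow M (Suc k) = M ** mat_pow M k"

definition mat_exp :: "real^'n^'n \<Rightarrow> real^'n^'n" where
  "mat_exp M = (\<chi> i j. (\<Sum>k. (mat_pow M k $ i $ j) / fact k))"

definition sym_part :: "real^'n^'n \<Rightarrow> real^'n^'n" where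
  "sym_part C = (1/2) *\<^sub>R (C + transpose C)"

definition conditionA :: "real^'n^'n \<Rightarrow> bool" where
  "conditionA C \<longleftrightarrow>
     (\<forall>x. 0 \<le> x \<bullet> (sym_part C *v x)) \<and>
     (\<forall>V. subspace V \<longrightarrow> V \<subseteq> {x. sym_part C *v x = 0} \<longrightarrow>
          (\<forall>x\<in>V. transpose C *v x \<in> V) \<longrightarrow> V = {0})"

definition hnorm :: "real^'n^'n \<Rightarrow> real \<Rightarrow> real" where
  "hnorm C t = onorm (\<lambda>x. mat_exp (- (t *\<^sub>R C)) *v x)"

(* m-tensors over R^d: functions on index tuples (i_1,...,i_m), i.e. lists of length m.
   F^(m): symmetric m-tensors (zero off length-m lists). *)
definition sym_tensors :: "nat \<Rightarrow> ('n list \<Rightarrow> real) set" where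
  "sym_tensors m = {A. (\<forall>xs. length xs \<noteq> m \<longrightarrow> A xs = 0) \<and>
      (\<forall>xs ys. length xs = m \<longrightarrow> mset ys = mset xs \<longrightarrow> A ys = A xs)}"

definition frob :: "nat \<Rightarrow> ('n::finite list \<Rightarrow> real) \<Rightarrow> real" where
  "frob m A = sqrt (\<Sum>xs\<in>{xs. length xs = m}. (A xs)\<^sup>2)"

definition multi_idx :: "nat \<Rightarrow> ('n::finite \<Rightarrow> nat) set" where
  "multi_idx m = {\<alpha>. (\<Sum>k\<in>UNIV. \<alpha> k) = m}"

(* A_alpha := A_{i_1..i_m} for any index tuple with #{r. i_r = k} = alpha_k *)
definition tcomp :: "('n list \<Rightarrow> real) \<Rightarrow> ('n \<Rightarrow> nat) \<Rightarrow> real" where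
  "tcomp A \<alpha> = A (SOME xs. \<forall>k. count (mset xs) k = \<alpha> k)"

definition idx_plus :: "'n \<Rightarrow> ('n \<Rightarrow> nat) \<Rightarrow> ('n \<Rightarrow> nat)" where
  "idx_plus l \<alpha> = \<alpha>(l := \<alpha> l + 1)"

definition idx_minus :: "'n \<Rightarrow> ('n \<Rightarrow> nat) \<Rightarrow> ('n \<Rightarrow> nat)" where
  "idx_minus l \<alpha> = \<alpha>(l := \<alpha> l - 1)"

definition tensor_ode_sol :: "real^'n^'n \<Rightarrow> nat \<Rightarrow> (real \<Rightarrow> 'n::finite list \<Rightarrow> real) \<Rightarrow> bool" where
  "tensor_ode_sol C m D \<longleftrightarrow>
     (\<forall>t\<ge>0. D t \<in> sym_tensors m) \<and>
     (\<forall>\<alpha>\<in>multi_idx m. \<forall>t\<ge>0.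
        ((\<lambda>s. tcomp (D s) \<alpha>) has_real_derivative
           (- (\<Sum>j\<in>UNIV. \<Sum>l\<in>UNIV.
                 real (\<alpha> j) * C $ j $ l * tcomp (D t) (idx_plus l (idx_minus j \<alpha>)))))
        (at t within {0..}))"

end

theory Submission
  imports Defs
begin

lemma scaleR_mm: "(c *\<^sub>R A) ** (B::real^'n^'n) = c *\<^sub>R (A ** B)"
  by (simp add: matrix_matrix_mult_def vec_eq_iff sum_distrib_left algebra_simps)

lemma mm_scaleR: "(A::real^'n^'n) ** (c *\<^sub>R B) = c *\<^sub>R (A ** B)"
  by (simp add: matrix_matrix_mult_def vec_eq_iff sum_distrib_left algebra_simps)

lemma mp_scale: "mat_pow (c *\<^sub>R M) k = c^k *\<^sub>R mat_pow M k"
  by (induction k) (auto simp: scaleR_mm mm_scaleR)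

lemma mp_Suc_ent: "mat_pow M (Suc k) $ i $ j = (\<Sum>l\<in>UNIV. M $ i $ l * mat_pow M k $ l $ j)"
  by (simp add: matrix_matrix_mult_def)

lemma mp_bound: "\<bar>mat_pow M k $ i $ j\<bar> \<le> (\<Sum>i\<in>UNIV. \<Sum>l\<in>UNIV. \<bar>M $ i $ l\<bar>)^k"
proof (induction k arbitrary: i j)
  case 0 then show ?case by (simp add: mat_def)
next
  case (Suc k)
  let ?B = "(\<Sum>i\<in>UNIV. \<Sum>l\<in>UNIV. \<bar>M $ i $ l\<bar>)"
  have "\<bar>mat_pow M (Suc k) $ i $ j\<bar> \<le> (\<Sum>l\<in>UNIV. \<bar>M $ i $ l\<bar> * \<bar>mat_pow M k $ l $ j\<bar>)"
    unfolding mp_Suc_ent by (rule order_trans[OF sum_abs]) (simp add: abs_mult)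
  also have "\<dots> \<le> (\<Sum>l\<in>UNIV. \<bar>M $ i $ l\<bar> * ?B^k)"
    by (rule sum_mono, rule mult_left_mono, rule Suc.IH, simp)
  also have "\<dots> = (\<Sum>l\<in>UNIV. \<bar>M $ i $ l\<bar>) * ?B^k" by (simp add: sum_distrib_right)
  also have "\<dots> \<le> ?B * ?B^k"
    by (rule mult_right_mono, rule member_le_sum[where f="\<lambda>i. \<Sum>l\<in>UNIV. \<bar>M $ i $ l\<bar>"]) (auto intro!: zero_le_power sum_nonneg)
  finally show ?case by simp
qed

definition ent :: "real^'n^'n \<Rightarrow> 'n \<Rightarrow> 'n \<Rightarrow> real \<Rightarrow> real" where
  "ent M i j t = (\<Sum>k. mat_pow M k $ i $ j / fact k * t^k)"

lemma ent_summable: "summable (\<lambda>k. mat_pow M k $ i $ j / fact k * t^k)"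
proof -
  let ?B = "(\<Sum>i\<in>UNIV. \<Sum>l\<in>UNIV. \<bar>M $ i $ l\<bar>)"
  have s: "summable (\<lambda>k. inverse (fact k) * (?B * \<bar>t\<bar>)^k)" by (rule summable_exp)
  have b: "norm (mat_pow M k $ i $ j / fact k * t^k) \<le> inverse (fact k) * (?B * \<bar>t\<bar>)^k" for k
  proof -
    have "norm (mat_pow M k $ i $ j / fact k * t^k) = \<bar>mat_pow M k $ i $ j\<bar> * \<bar>t\<bar>^k / fact k"
      by (simp add: abs_mult power_abs)
    also have "\<dots> \<le> ?B^k * \<bar>t\<bar>^k / fact k"
      by (intro divide_right_mono mult_right_mono mp_bound) auto
    finally show ?thesis by (simp add: power_mult_distrib field_simps)
  qed
  show ?thesis by (rule summable_comparison_test[OF _ s]) (use b in auto)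
qed

lemma mat_exp_ent: "mat_exp (t *\<^sub>R M) $ i $ j = ent M i j t"
  by (simp add: mat_exp_def ent_def mp_scale mult.commute)

lemma ent_deriv: "(ent M i j has_real_derivative (\<Sum>l\<in>UNIV. M $ i $ l * ent M l j t)) (at t)"
proof -
  have d: "(ent M i j has_real_derivative (\<Sum>k. diffs (\<lambda>k. mat_pow M k $ i $ j / fact k) k * t^k)) (at t)"
    unfolding ent_def[abs_def]
    by (rule termdiffs_strong_converges_everywhere) (rule ent_summable)
  have "diffs (\<lambda>k. mat_pow M k $ i $ j / fact k) k * t^k =
        (\<Sum>l\<in>UNIV. M $ i $ l * (mat_pow M k $ l $ j / fact k * t^k))" for k
    unfolding diffs_def mp_Suc_ent by (simp add: sum_distrib_left sum_divide_distrib field_simps fact_Suc del: of_nat_Suc)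
  then have "(\<Sum>k. diffs (\<lambda>k. mat_pow M k $ i $ j / fact k) k * t^k) =
        (\<Sum>k. \<Sum>l\<in>UNIV. M $ i $ l * (mat_pow M k $ l $ j / fact k * t^k))" by simp
  also have "\<dots> = (\<Sum>l\<in>UNIV. \<Sum>k. M $ i $ l * (mat_pow M k $ l $ j / fact k * t^k))"
    by (rule suminf_sum) (intro summable_mult ent_summable)
  also have "\<dots> = (\<Sum>l\<in>UNIV. M $ i $ l * ent M l j t)"
    unfolding ent_def by (simp only: suminf_mult[OF ent_summable])
  finally show ?thesis using d by simp
qed

lemma finite_Lm: "finite {xs::'n::finite list. length xs = m}"
  using finite_lists_length_eq[of "UNIV::'n set" m] by simp

lemma Lm_Suc: "{xs::'n list. length xs = Suc m} = (\<lambda>(x,xs). x#xs) ` (UNIV \<times> {xs. length xs = m})"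
  by (auto simp: length_Suc_conv image_def)

lemma sum_Lm_Suc:
  "(\<Sum>xs\<in>{xs::'n::finite list. length xs = Suc m}. f xs) = (\<Sum>x\<in>UNIV. \<Sum>xs\<in>{xs. length xs = m}. f (x#xs))"
proof -
  have "inj_on (\<lambda>(x,xs). x#(xs::'n list)) (UNIV \<times> {xs. length xs = m})"
    by (auto simp: inj_on_def)
  then have "(\<Sum>xs\<in>{xs::'n::finite list. length xs = Suc m}. f xs) =
      (\<Sum>p\<in>UNIV \<times> {xs. length xs = m}. f (fst p # snd p))"
    unfolding Lm_Suc by (subst sum.reindex) (auto simp: case_prod_beta)
  also have "\<dots> = (\<Sum>x\<in>UNIV. \<Sum>xs\<in>{xs. length xs = m}. f (x#xs))"
    by (simp add: sum.cartesian_product case_prod_beta)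
  finally show ?thesis .
qed

lemma Lm_0: "{xs::'n list. length xs = 0} = {[]}" by auto

lemma sum_Lm_prod: "(\<Sum>xs\<in>{xs::'n::finite list. length xs = m}. prod_list (map (f::'n \<Rightarrow> real) xs)) = (\<Sum>x\<in>UNIV. f x)^m"
proof (induction m)
  case 0 then show ?case by (simp add: Lm_0)
next
  case (Suc m)
  have "(\<Sum>xs\<in>{xs::'n::finite list. length xs = Suc m}. prod_list (map f xs)) =
     (\<Sum>x\<in>UNIV. f x * (\<Sum>xs\<in>{xs. length xs = m}. prod_list (map f xs)))"
    unfolding sum_Lm_Suc list.map prod_list.Cons by (rule sum.cong[OF refl]) (rule sum_distrib_left[symmetric])
  also have "\<dots> = (\<Sum>x\<in>UNIV. f x)^Suc m" unfolding Suc by (simp add: sum_distrib_right)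
  finally show ?case .
qed

primrec Lop :: "real^'n^'n \<Rightarrow> ('n::finite list \<Rightarrow> real) \<Rightarrow> 'n list \<Rightarrow> real" where
  "Lop C X [] = 0"
| "Lop C X (x#xs) = (\<Sum>l\<in>UNIV. C $ x $ l * X (l#xs)) + Lop C (\<lambda>ys. X (x#ys)) xs"

lemma Lop_scale: "Lop C (\<lambda>ys. c * X ys) xs = c * Lop C X xs"
  by (induction xs arbitrary: X) (simp_all add: sum_distrib_left algebra_simps)

lemma Lop_diff: "Lop C (\<lambda>ys. X ys - Y ys) xs = Lop C X xs - Lop C Y xs"
  by (induction xs arbitrary: X Y) (simp_all add: sum_subtractf right_diff_distrib)

lemma Lop_add: "Lop C (\<lambda>ys. X ys + Y ys) xs = Lop C X xs + Lop C Y xs"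
  by (induction xs arbitrary: X Y) (simp_all add: sum.distrib distrib_left)

lemma Lop_zero: "Lop C (\<lambda>ys. 0) xs = 0"
  by (induction xs) simp_all

lemma Lop_sum: "finite S \<Longrightarrow> Lop C (\<lambda>ys. \<Sum>y\<in>S. F y ys) xs = (\<Sum>y\<in>S. Lop C (F y) xs)"
  by (induction S rule: finite_induct) (simp_all add: Lop_add Lop_zero)

lemma Lop_cong: "(\<And>ys. length ys = length xs \<Longrightarrow> X ys = Y ys) \<Longrightarrow> Lop C X xs = Lop C Y xs"
proof (induction xs arbitrary: X Y)
  case (Cons x xs)
  have "Lop C (\<lambda>ys. X (x#ys)) xs = Lop C (\<lambda>ys. Y (x#ys)) xs" by (rule Cons.IH) (simp add: Cons.prems)
  moreover have "X (l#xs) = Y (l#xs)" for l by (simp add: Cons.prems)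
  ultimately show ?case by simp
qed simp

definition Bc :: "real^'n^'n \<Rightarrow> real" where
  "Bc C = (\<Sum>i\<in>UNIV. \<Sum>l\<in>UNIV. \<bar>C $ i $ l\<bar>)"

lemma Bc_nonneg: "0 \<le> Bc C" unfolding Bc_def by (auto intro!: sum_nonneg)

lemma Lop_bound:
  assumes "\<And>ys. length ys = length xs \<Longrightarrow> \<bar>X ys\<bar> \<le> M" and "0 \<le> M"
  shows "\<bar>Lop C X xs\<bar> \<le> real (length xs) * Bc C * M"
  using assms
proof (induction xs arbitrary: X)
  case Nil then show ?case by simp
next
  case (Cons x xs)
  have "\<bar>\<Sum>l\<in>UNIV. C $ x $ l * X (l#xs)\<bar> \<le> (\<Sum>l\<in>UNIV. \<bar>C $ x $ l\<bar> * M)"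
    by (rule order_trans[OF sum_abs], rule sum_mono) (auto simp: abs_mult intro!: mult_left_mono Cons.prems)
  also have "\<dots> = (\<Sum>l\<in>UNIV. \<bar>C $ x $ l\<bar>) * M" by (simp add: sum_distrib_right)
  also have "\<dots> \<le> Bc C * M" unfolding Bc_def
    by (rule mult_right_mono, rule member_le_sum[where f="\<lambda>i. \<Sum>l\<in>UNIV. \<bar>C $ i $ l\<bar>"]) (use Cons.prems in \<open>auto intro!: sum_nonneg\<close>)
  finally have 1: "\<bar>\<Sum>l\<in>UNIV. C $ x $ l * X (l#xs)\<bar> \<le> Bc C * M" .
  have 2: "\<bar>Lop C (\<lambda>ys. X (x#ys)) xs\<bar> \<le> real (length xs) * Bc C * M"
    by (rule Cons.IH) (use Cons.prems in auto)
  show ?case using 1 2 by (simp add: algebra_simps)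
qed

lemma mset_aux: "j \<in> set xs \<Longrightarrow> mset (l # remove1 j (x#xs)) = mset (x # l # remove1 j xs)"
proof (cases "j = x")
  case True
  assume "j \<in> set xs"
  then have e: "add_mset j (mset (remove1 j xs)) = mset xs"
    by (simp only: mset_remove1) (simp add: insert_DiffM)
  have r: "remove1 j (x#xs) = xs" using True by simp
  have "mset (x # l # remove1 j xs) = add_mset x (add_mset l (mset (remove1 j xs)))" by (simp only: mset.simps)
  also have "\<dots> = add_mset l (add_mset x (mset (remove1 j xs)))" by (rule add_mset_commute)
  also have "\<dots> = add_mset l (mset xs)" using e True by (simp only:)
  also have "\<dots> = mset (l # remove1 j (x#xs))" by (simp only: r mset.simps)
  finally show ?thesis by (rule sym)
next
  case False
  then have r: "remove1 j (x#xs) = x # remove1 j xs" by simp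
  have "mset (x # l # remove1 j xs) = add_mset x (add_mset l (mset (remove1 j xs)))" by (simp only: mset.simps)
  also have "\<dots> = add_mset l (add_mset x (mset (remove1 j xs)))" by (rule add_mset_commute)
  also have "\<dots> = mset (l # remove1 j (x#xs))" by (simp only: r mset.simps)
  finally show ?thesis by (rule sym)
qed

lemma Lop_sym:
  assumes "\<And>ys zs. mset ys = mset zs \<Longrightarrow> X ys = X zs"
  shows "Lop C X xs = (\<Sum>j\<in>UNIV. \<Sum>l\<in>UNIV. real (count (mset xs) j) * C $ j $ l * X (l # remove1 j xs))"
  using assms
proof (induction xs arbitrary: X)
  case Nil show ?case by simp
next
  case (Cons x xs)
  have IH: "Lop C (\<lambda>ys. X (x#ys)) xs = (\<Sum>j\<in>UNIV. \<Sum>l\<in>UNIV. real (count (mset xs) j) * C $ j $ l * X (x # l # remove1 j xs))"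
  proof (rule Cons.IH[of "\<lambda>ys. X (x#ys)"])
    fix ys zs :: "'a list" assume "mset ys = mset zs"
    then have "mset (x#ys) = mset (x#zs)" by simp
    then show "X (x#ys) = X (x#zs)" by (rule Cons.prems)
  qed
  have b: "real (count (mset xs) j) * C $ j $ l * X (l # remove1 j (x#xs)) =
           real (count (mset xs) j) * C $ j $ l * X (x # l # remove1 j xs)" for j l
  proof (cases "count (mset xs) j = 0")
    case False
    then have jx: "j \<in> set xs" by (simp add: count_eq_zero_iff)
    have "X (l # remove1 j (x#xs)) = X (x # l # remove1 j xs)"
      by (rule Cons.prems, rule mset_aux[OF jx])
    then show ?thesis by simp
  qed simp
  have c: "real (count (mset (x#xs)) j) * C $ j $ l * X (l # remove1 j (x#xs)) =
     (if j = x then C $ x $ l * X (l#xs) else 0) + real (count (mset xs) j) * C $ j $ l * X (x # l # remove1 j xs)" for j l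
  proof (cases "j = x")
    case True
    then show ?thesis using b[of j l] by (simp add: distrib_right)
  next
    case False
    then show ?thesis using b[of j l] by simp
  qed
  have d: "(\<Sum>j\<in>UNIV. \<Sum>l\<in>UNIV. (if j = x then C $ x $ l * X (l#xs) else 0)) = (\<Sum>l\<in>UNIV. C $ x $ l * X (l#xs))"
  proof -
    have "(\<Sum>j\<in>UNIV. \<Sum>l\<in>UNIV. (if j = x then C $ x $ l * X (l#xs) else 0)) =
          (\<Sum>j\<in>UNIV. (if j = x then (\<Sum>l\<in>UNIV. C $ x $ l * X (l#xs)) else 0))"
      by (rule sum.cong) auto
    then show ?thesis by simp
  qed
  have "Lop C X (x#xs) = (\<Sum>l\<in>UNIV. C $ x $ l * X (l#xs)) + Lop C (\<lambda>ys. X (x#ys)) xs" by simp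
  also have "\<dots> = (\<Sum>j\<in>UNIV. \<Sum>l\<in>UNIV. (if j = x then C $ x $ l * X (l#xs) else 0)) +
      (\<Sum>j\<in>UNIV. \<Sum>l\<in>UNIV. real (count (mset xs) j) * C $ j $ l * X (x # l # remove1 j xs))"
    by (simp only: d IH)
  also have "\<dots> = (\<Sum>j\<in>UNIV. \<Sum>l\<in>UNIV. real (count (mset (x#xs)) j) * C $ j $ l * X (l # remove1 j (x#xs)))"
    by (simp only: c sum.distrib)
  finally show ?case .
qed

primrec tp :: "real^'n^'n \<Rightarrow> ('n::finite list \<Rightarrow> real) \<Rightarrow> 'n list \<Rightarrow> real" where
  "tp A X [] = X []"
| "tp A X (x#xs) = (\<Sum>y\<in>UNIV. A $ x $ y * tp A (\<lambda>ys. X (y#ys)) xs)"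

lemma tp_id: "tp (mat 1) X xs = X xs"
proof (induction xs arbitrary: X)
  case (Cons x xs)
  have "(\<Sum>y\<in>UNIV. mat 1 $ x $ y * X (y#xs)) = X (x#xs)"
    by (simp add: mat_def if_distrib[of "\<lambda>c. c * _"] sum.delta cong: if_cong)
  then show ?case by (simp add: Cons.IH)
qed simp

lemma tp_scale: "tp A (\<lambda>ys. c * X ys) xs = c * tp A X xs"
  by (induction xs arbitrary: X) (simp_all add: sum_distrib_left algebra_simps)

lemma tp_rank1: "tp A (\<lambda>ys. prod_list (map (\<lambda>y. v $ y) ys)) xs = prod_list (map (\<lambda>x. (A *v v) $ x) xs)"
proof (induction xs)
  case (Cons x xs)
  have "tp A (\<lambda>ys. prod_list (map (\<lambda>y. v $ y) ys)) (x#xs) =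
     (\<Sum>y\<in>UNIV. A $ x $ y * (v $ y * tp A (\<lambda>ys. prod_list (map (\<lambda>y. v $ y) ys)) xs))"
    by (simp add: tp_scale)
  then show ?case using Cons by (simp add: matrix_vector_mult_def sum_distrib_right algebra_simps)
qed simp

lemma tp_deriv:
  assumes dE: "\<And>i j t. ((\<lambda>t. E t $ i $ j) has_real_derivative - (\<Sum>l\<in>UNIV. C $ i $ l * E t $ l $ j)) (at t)"
  shows "((\<lambda>t. tp (E t) X xs) has_real_derivative - Lop C (tp (E t) X) xs) (at t)"
proof (induction xs arbitrary: X)
  case Nil then show ?case by simp
next
  case (Cons x xs)
  let ?T = "\<lambda>y. tp (E t) (\<lambda>ys. X (y#ys))"
  have d: "((\<lambda>t. tp (E t) X (x#xs)) has_real_derivative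
     (\<Sum>y\<in>UNIV. (- (\<Sum>l\<in>UNIV. C $ x $ l * E t $ l $ y)) * ?T y xs + (- Lop C (?T y) xs) * E t $ x $ y)) (at t)"
    unfolding tp.simps by (intro DERIV_sum DERIV_mult dE Cons.IH)
  have e1: "(\<Sum>y\<in>UNIV. (- (\<Sum>l\<in>UNIV. C $ x $ l * E t $ l $ y)) * ?T y xs) = - (\<Sum>l\<in>UNIV. C $ x $ l * tp (E t) X (l#xs))"
    by (simp add: sum_distrib_left sum_distrib_right sum_negf algebra_simps) (rule sum.swap)
  have e2: "(\<Sum>y\<in>UNIV. (- Lop C (?T y) xs) * E t $ x $ y) = - Lop C (\<lambda>ys. tp (E t) X (x#ys)) xs"
    by (simp add: Lop_sum Lop_scale sum_negf mult.commute)
  show ?case using d unfolding sum.distrib e1 e2 by simp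
qed

lemma tp_norm:
  fixes A :: "real^'n^'n"
  assumes hA: "\<And>v::'n\<Rightarrow>real. (\<Sum>i\<in>UNIV. (\<Sum>j\<in>UNIV. A $ i $ j * v j)\<^sup>2) \<le> h\<^sup>2 * (\<Sum>j\<in>UNIV. (v j)\<^sup>2)"
  shows "(\<Sum>xs\<in>{xs::'n list. length xs = m}. (tp A X xs)\<^sup>2) \<le> (h\<^sup>2)^m * (\<Sum>xs\<in>{xs::'n list. length xs = m}. (X xs)\<^sup>2)"
proof (induction m arbitrary: X)
  case 0 then show ?case by (simp add: Lm_0)
next
  case (Suc m)
  let ?T = "\<lambda>y. tp A (\<lambda>ys. X (y#ys))"
  let ?L = "{xs::'n list. length xs = m}"
  have "(\<Sum>xs\<in>{xs::'n list. length xs = Suc m}. (tp A X xs)\<^sup>2) =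
        (\<Sum>x\<in>UNIV. \<Sum>xs\<in>?L. (\<Sum>y\<in>UNIV. A $ x $ y * ?T y xs)\<^sup>2)"
    unfolding sum_Lm_Suc by simp
  also have "\<dots> = (\<Sum>xs\<in>?L. \<Sum>x\<in>UNIV. (\<Sum>y\<in>UNIV. A $ x $ y * ?T y xs)\<^sup>2)"
    by (rule sum.swap)
  also have "\<dots> \<le> (\<Sum>xs\<in>?L. h\<^sup>2 * (\<Sum>y\<in>UNIV. (?T y xs)\<^sup>2))"
    by (rule sum_mono) (rule hA)
  also have "\<dots> = h\<^sup>2 * (\<Sum>y\<in>UNIV. \<Sum>xs\<in>?L. (?T y xs)\<^sup>2)"
    unfolding sum_distrib_left[symmetric] by (subst sum.swap) (rule refl)
  also have "\<dots> \<le> h\<^sup>2 * (\<Sum>y\<in>UNIV. (h\<^sup>2)^m * (\<Sum>xs\<in>?L. (X (y#xs))\<^sup>2))"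
    by (intro mult_left_mono sum_mono Suc.IH) auto
  also have "\<dots> = (h\<^sup>2)^Suc m * (\<Sum>xs\<in>{xs::'n list. length xs = Suc m}. (X xs)\<^sup>2)"
    unfolding sum_Lm_Suc by (simp add: sum_distrib_left mult.assoc)
  finally show ?case .
qed

lemma frob_tp:
  fixes A :: "real^'n^'n"
  assumes hA: "\<And>v::'n\<Rightarrow>real. (\<Sum>i\<in>UNIV. (\<Sum>j\<in>UNIV. A $ i $ j * v j)\<^sup>2) \<le> h\<^sup>2 * (\<Sum>j\<in>UNIV. (v j)\<^sup>2)"
    and h: "0 \<le> h"
  shows "frob m (tp A X) \<le> h^m * frob m X"
proof -
  have "frob m (tp A X) \<le> sqrt ((h\<^sup>2)^m * (\<Sum>xs\<in>{xs::'n list. length xs = m}. (X xs)\<^sup>2))"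
    unfolding frob_def by (rule real_sqrt_le_mono, rule tp_norm[OF hA])
  also have "\<dots> = h^m * frob m X"
  proof -
    have "(h\<^sup>2)^m = (h^m)\<^sup>2" by (simp only: power_mult[symmetric] mult.commute)
    then have "sqrt ((h\<^sup>2)^m) = h^m" using h by simp
    then show ?thesis unfolding frob_def real_sqrt_mult by simp
  qed
  finally show ?thesis .
qed

lemma norm_sq_vec: "(norm (w::real^'n))\<^sup>2 = (\<Sum>j\<in>UNIV. (w $ j)\<^sup>2)"
  unfolding norm_vec_def L2_set_def by (simp add: sum_nonneg)

lemma hA_onorm:
  fixes A :: "real^'n^'n"
  shows "(\<Sum>i\<in>UNIV. (\<Sum>j\<in>UNIV. A $ i $ j * v j)\<^sup>2) \<le> (onorm (\<lambda>x. A *v x))\<^sup>2 * (\<Sum>j\<in>UNIV. (v j)\<^sup>2)"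
proof -
  let ?w = "\<chi> j. v j"
  have "norm (A *v ?w) \<le> onorm (\<lambda>x. A *v x) * norm ?w"
    by (rule onorm) simp
  then have "(norm (A *v ?w))\<^sup>2 \<le> (onorm (\<lambda>x. A *v x) * norm ?w)\<^sup>2"
    by (rule power_mono) simp
  moreover have "(norm (A *v ?w))\<^sup>2 = (\<Sum>i\<in>UNIV. (\<Sum>j\<in>UNIV. A $ i $ j * v j)\<^sup>2)"
    by (simp add: norm_sq_vec matrix_vector_mult_def)
  moreover have "(norm ?w)\<^sup>2 = (\<Sum>j\<in>UNIV. (v j)\<^sup>2)" by (simp add: norm_sq_vec)
  ultimately show ?thesis by (simp only: power_mult_distrib)
qed

lemma uniq:
  fixes X :: "real \<Rightarrow> 'n::finite list \<Rightarrow> real"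
  assumes dX: "\<And>xs t. length xs = m \<Longrightarrow> 0 \<le> t \<Longrightarrow> ((\<lambda>s. X s xs) has_real_derivative - Lop C (X t) xs) (at t within {0..})"
    and X0: "\<And>xs. length xs = m \<Longrightarrow> X 0 xs = 0"
    and t: "0 \<le> t" and xs: "length xs = m"
  shows "X t xs = 0"
proof -
  define L where "L = {xs::'n list. length xs = m}"
  define Q where "Q s = (\<Sum>ys\<in>L. X s ys * X s ys)" for s
  define K where "K = real (card L) * real m * Bc C"
  have finL: "finite L" unfolding L_def by (rule finite_Lm)
  have Qnn: "0 \<le> Q s" for s unfolding Q_def by (auto intro!: sum_nonneg)
  have Xle: "\<bar>X s ys\<bar> \<le> sqrt (Q s)" if "ys \<in> L" for s ys
  proof -
    have "X s ys * X s ys \<le> Q s" unfolding Q_def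
      by (rule member_le_sum[where f="\<lambda>ys. X s ys * X s ys"]) (use that finL in auto)
    then show ?thesis by (intro real_le_rsqrt) (simp add: power2_eq_square)
  qed
  have Lb: "\<bar>Lop C (X s) ys\<bar> \<le> real m * Bc C * sqrt (Q s)" if "ys \<in> L" for s ys
  proof -
    have "\<bar>Lop C (X s) ys\<bar> \<le> real (length ys) * Bc C * sqrt (Q s)"
      by (rule Lop_bound) (use that Qnn in \<open>auto simp: L_def intro!: Xle\<close>)
    then show ?thesis using that by (simp add: L_def)
  qed
  define Q' where "Q' s = (\<Sum>ys\<in>L. X s ys * (- Lop C (X s) ys) + (- Lop C (X s) ys) * X s ys)" for s
  have dQ: "(Q has_real_derivative Q' s) (at s within {0..})" if "0 \<le> s" for s
    unfolding Q_def[abs_def] Q'_def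
    by (intro DERIV_sum DERIV_mult') (use that in \<open>auto simp: L_def dX\<close>)
  have Q'b: "Q' s \<le> 2 * K * Q s" for s
  proof -
    have "X s ys * (- Lop C (X s) ys) + (- Lop C (X s) ys) * X s ys \<le> 2 * real m * Bc C * Q s" if "ys \<in> L" for ys
    proof -
      have "X s ys * (- Lop C (X s) ys) + (- Lop C (X s) ys) * X s ys \<le> 2 * (\<bar>X s ys\<bar> * \<bar>Lop C (X s) ys\<bar>)"
        by (simp add: abs_mult[symmetric])
      also have "\<dots> \<le> 2 * (sqrt (Q s) * (real m * Bc C * sqrt (Q s)))"
        by (intro mult_left_mono mult_mono Xle Lb that) (auto intro: Qnn)
      also have "\<dots> = 2 * real m * Bc C * (sqrt (Q s) * sqrt (Q s))" by (simp add: algebra_simps)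
      also have "\<dots> = 2 * real m * Bc C * Q s" using Qnn[of s] by simp
      finally show ?thesis .
    qed
    then have "Q' s \<le> real (card L) * (2 * real m * Bc C * Q s)"
      unfolding Q'_def by (rule sum_bounded_above)
    then show ?thesis by (simp add: K_def algebra_simps)
  qed
  define g where "g s = Q s * exp (-(2*K) * s)" for s
  have de: "((\<lambda>s. exp (-(2*K) * s)) has_real_derivative exp (-(2*K) * s) * (-(2*K))) (at s within {0..})" for s
    by (rule has_field_derivative_at_within, rule DERIV_fun_exp, rule DERIV_cmult_Id)
  have dg: "(g has_real_derivative (Q s * (exp (-(2*K) * s) * (-(2*K))) + Q' s * exp (-(2*K) * s))) (at s within {0..})"
    if "0 \<le> s" for s
    unfolding g_def[abs_def] by (rule DERIV_mult'[OF dQ[OF that] de])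
  have dgn: "Q s * (exp (-(2*K) * s) * (-(2*K))) + Q' s * exp (-(2*K) * s) \<le> 0" for s
  proof -
    have "Q s * (exp (-(2*K) * s) * (-(2*K))) + Q' s * exp (-(2*K) * s) = (Q' s - 2 * K * Q s) * exp (-(2*K) * s)"
      by (simp add: algebra_simps)
    also have "\<dots> \<le> 0" using Q'b[of s] by (intro mult_nonpos_nonneg) auto
    finally show ?thesis .
  qed
  have "g t \<le> g 0"
  proof (rule DERIV_nonpos_imp_decreasing_open[OF t])
    fix x :: real assume x: "0 < x" "x < t"
    have x0: "0 \<le> x" using x by simp
    have sub: "{0<..} \<subseteq> {0::real..}" by auto
    have "(g has_real_derivative (Q x * (exp (-(2*K) * x) * (-(2*K))) + Q' x * exp (-(2*K) * x))) (at x within {0<..})"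
      by (rule has_field_derivative_subset[OF dg[OF x0] sub])
    moreover have "at x within {0<..} = at x" by (rule at_within_open) (use x in auto)
    ultimately have "(g has_real_derivative (Q x * (exp (-(2*K) * x) * (-(2*K))) + Q' x * exp (-(2*K) * x))) (at x)"
      by simp
    then show "\<exists>y. (g has_real_derivative y) (at x) \<and> y \<le> 0" using dgn[of x] by (intro exI conjI)
  next
    show "continuous_on {0..t} g"
      unfolding continuous_on_eq_continuous_within
    proof
      fix x assume x: "x \<in> {0..t}"
      then have x0: "0 \<le> x" by simp
      have "continuous (at x within {0..}) g" by (rule DERIV_continuous[OF dg[OF x0]])
      then show "continuous (at x within {0..t}) g" by (rule continuous_within_subset) auto
    qed
  qed
  moreover have "g 0 = 0" unfolding g_def Q_def by (simp add: X0 L_def)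
  moreover have "0 \<le> g t" unfolding g_def using Qnn by simp
  ultimately have "Q t = 0" unfolding g_def by simp
  then show ?thesis using Xle[of xs t] xs by (simp add: L_def)
qed

definition Et :: "real^'n^'n \<Rightarrow> real \<Rightarrow> real^'n^'n" where
  "Et C t = mat_exp (- (t *\<^sub>R C))"

lemma Et_ent: "Et C t $ i $ j = ent (-C) i j t"
proof -
  have "- (t *\<^sub>R C) = t *\<^sub>R (-C)" by simp
  then show ?thesis unfolding Et_def by (simp only: mat_exp_ent)
qed

lemma Et_deriv: "((\<lambda>t. Et C t $ i $ j) has_real_derivative - (\<Sum>l\<in>UNIV. C $ i $ l * Et C t $ l $ j)) (at t)"
proof -
  have "(ent (-C) i j has_real_derivative (\<Sum>l\<in>UNIV. (-C) $ i $ l * ent (-C) l j t)) (at t)"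
    by (rule ent_deriv)
  moreover have "(\<lambda>t. Et C t $ i $ j) = ent (-C) i j" by (simp add: Et_ent fun_eq_iff)
  moreover have "(\<Sum>l\<in>UNIV. (-C) $ i $ l * ent (-C) l j t) = - (\<Sum>l\<in>UNIV. C $ i $ l * Et C t $ l $ j)"
    by (simp add: Et_ent sum_negf)
  ultimately show ?thesis by simp
qed

lemma Et_0: "Et (C::real^'n^'n) 0 = mat 1"
proof -
  have "ent M i j 0 = mat 1 $ i $ j" for M :: "real^'n^'n" and i j
    unfolding ent_def using powser_zero[of "\<lambda>k. mat_pow M k $ i $ j / fact k"] by simp
  then show ?thesis by (simp add: vec_eq_iff Et_ent)
qed

lemma sym_full:
  assumes A: "A \<in> sym_tensors m" and e: "mset ys = mset zs"
  shows "A ys = A zs"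
proof -
  have l: "length ys = length zs" using arg_cong[OF e, of size] by simp
  have z: "\<forall>xs. length xs \<noteq> m \<longrightarrow> A xs = 0" and s: "\<forall>xs ys. length xs = m \<longrightarrow> mset ys = mset xs \<longrightarrow> A ys = A xs"
    using A unfolding sym_tensors_def by blast+
  show ?thesis
  proof (cases "length zs = m")
    case True
    then show ?thesis using s e by blast
  next
    case False
    then show ?thesis using z l by metis
  qed
qed

lemma tcomp_eq:
  assumes sym: "\<And>ys zs. mset ys = mset zs \<Longrightarrow> A ys = A zs"
    and c: "count (mset xs) = \<alpha>"
  shows "tcomp A \<alpha> = A xs"
proof -
  have ex: "\<exists>ys. \<forall>k. count (mset ys) k = \<alpha> k" by (rule exI[of _ xs]) (simp add: c)
  define ys where "ys = (SOME ys. \<forall>k. count (mset ys) k = \<alpha> k)"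
  have "\<forall>k. count (mset ys) k = \<alpha> k" unfolding ys_def by (rule someI_ex[OF ex])
  then have "mset ys = mset xs" using c by (simp add: multiset_eq_iff)
  then show ?thesis unfolding tcomp_def ys_def[symmetric] by (rule sym)
qed

lemma len_count: "length xs = (\<Sum>k\<in>UNIV. count (mset (xs::'n::finite list)) k)"
proof (induction xs)
  case Nil then show ?case by simp
next
  case (Cons x xs)
  have "(\<Sum>k\<in>UNIV. count (mset (x#xs)) k) = (\<Sum>k\<in>UNIV. count (mset xs) k + (if k = x then 1 else 0))"
    by (rule sum.cong) auto
  also have "\<dots> = (\<Sum>k\<in>UNIV. count (mset xs) k) + 1" by (simp add: sum.distrib)
  finally show ?case using Cons by simp
qed

lemma multi_idx_ex:
  assumes "\<alpha> \<in> multi_idx m"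
  obtains xs :: "'n::finite list" where "count (mset xs) = \<alpha>" "length xs = m"
proof -
  have "count (Abs_multiset \<alpha>) = \<alpha>" by (rule count_Abs_multiset) simp
  moreover obtain xs where "mset xs = Abs_multiset \<alpha>" using ex_mset by blast
  ultimately have c: "count (mset xs) = \<alpha>" by simp
  then have "length xs = m" using assms unfolding multi_idx_def by (simp add: len_count)
  with c show ?thesis by (rule that)
qed

lemma count_idx:
  assumes "j \<in> set xs"
  shows "count (mset (l # remove1 j xs)) = idx_plus l (idx_minus j (count (mset xs)))"
proof
  fix k
  have "count (mset xs) j \<ge> 1" using assms by (simp add: Suc_le_eq)
  then show "count (mset (l # remove1 j xs)) k = idx_plus l (idx_minus j (count (mset xs))) k"
    unfolding idx_plus_def idx_minus_def by (cases "k = l"; cases "k = j") auto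
qed

lemma rhs_eq:
  assumes sy: "\<And>ys zs. mset ys = mset zs \<Longrightarrow> A ys = A zs"
  shows "(\<Sum>j\<in>UNIV. \<Sum>l\<in>UNIV. real (count (mset xs) j) * C $ j $ l *
            tcomp A (idx_plus l (idx_minus j (count (mset xs))))) = Lop C A xs"
proof -
  have L: "Lop C A xs = (\<Sum>j\<in>UNIV. \<Sum>l\<in>UNIV. real (count (mset xs) j) * C $ j $ l * A (l # remove1 j xs))"
    by (rule Lop_sym) (rule sy)
  have T: "real (count (mset xs) j) * C $ j $ l * tcomp A (idx_plus l (idx_minus j (count (mset xs)))) =
        real (count (mset xs) j) * C $ j $ l * A (l # remove1 j xs)" for j l
  proof (cases "j \<in> set xs")
    case True
    then show ?thesis using tcomp_eq[OF sy count_idx[OF True, of l]] by simp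
  next
    case False
    then show ?thesis by simp
  qed
  show ?thesis unfolding L T ..
qed

lemma ode_to_list:
  assumes sol: "tensor_ode_sol C m D" and xs: "length xs = m" and t: "0 \<le> t"
  shows "((\<lambda>s. D s xs) has_real_derivative - Lop C (D t) xs) (at t within {0..})"
proof -
  have mi: "count (mset xs) \<in> multi_idx m" unfolding multi_idx_def using xs by (simp add: len_count)
  have symD: "D s ys = D s zs" if "0 \<le> s" "mset ys = mset zs" for s ys zs
    using sol that unfolding tensor_ode_sol_def by (intro sym_full[of "D s" m]) auto
  have d: "((\<lambda>s. tcomp (D s) (count (mset xs))) has_real_derivative
           - (\<Sum>j\<in>UNIV. \<Sum>l\<in>UNIV. real (count (mset xs) j) * C $ j $ l *
               tcomp (D t) (idx_plus l (idx_minus j (count (mset xs)))))) (at t within {0..})"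
    using sol mi t unfolding tensor_ode_sol_def by blast
  have r: "(\<Sum>j\<in>UNIV. \<Sum>l\<in>UNIV. real (count (mset xs) j) * C $ j $ l *
               tcomp (D t) (idx_plus l (idx_minus j (count (mset xs))))) = Lop C (D t) xs"
    by (rule rhs_eq) (rule symD[OF t])
  show ?thesis
  proof (rule has_field_derivative_transform_within[OF _ zero_less_one])
    show "((\<lambda>s. tcomp (D s) (count (mset xs))) has_real_derivative - Lop C (D t) xs) (at t within {0..})"
      using d unfolding r .
    show "t \<in> {0..}" using t by simp
    fix s :: real assume "s \<in> {0..}"
    then show "tcomp (D s) (count (mset xs)) = D s xs"
      by (intro tcomp_eq) (auto intro: symD)
  qed
qed

lemma list_to_ode:
  fixes C :: "real^'n^'n" and D :: "real \<Rightarrow> 'n list \<Rightarrow> real"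
  assumes symD: "\<And>s. 0 \<le> s \<Longrightarrow> D s \<in> sym_tensors m"
    and dl: "\<And>xs t. length xs = m \<Longrightarrow> 0 \<le> t \<Longrightarrow> ((\<lambda>s. D s xs) has_real_derivative - Lop C (D t) xs) (at t within {0..})"
  shows "tensor_ode_sol C m D"
  unfolding tensor_ode_sol_def
proof (intro conjI allI impI ballI)
  fix s :: real assume "0 \<le> s" then show "D s \<in> sym_tensors m" by (rule symD)
next
  fix \<alpha> :: "'n \<Rightarrow> nat" and t :: real assume a: "\<alpha> \<in> multi_idx m" and t: "0 \<le> t"
  obtain xs where c: "count (mset xs) = \<alpha>" and xs: "length xs = m" using multi_idx_ex[OF a] by blast
  have sy: "D s ys = D s zs" if "0 \<le> s" "mset ys = mset zs" for s ys zs
    by (rule sym_full[OF symD[OF that(1)] that(2)])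
  have r: "(\<Sum>j\<in>UNIV. \<Sum>l\<in>UNIV. real (\<alpha> j) * C $ j $ l * tcomp (D t) (idx_plus l (idx_minus j \<alpha>))) = Lop C (D t) xs"
    unfolding c[symmetric] by (rule rhs_eq) (rule sy[OF t])
  show "((\<lambda>s. tcomp (D s) \<alpha>) has_real_derivative
           - (\<Sum>j\<in>UNIV. \<Sum>l\<in>UNIV. real (\<alpha> j) * C $ j $ l * tcomp (D t) (idx_plus l (idx_minus j \<alpha>)))) (at t within {0..})"
    unfolding r
  proof (rule has_field_derivative_transform_within[OF dl[OF xs t] zero_less_one])
    show "t \<in> {0..}" using t by simp
    fix s :: real assume "s \<in> {0..}"
    then show "D s xs = tcomp (D s) \<alpha>"
      by (intro tcomp_eq[symmetric] c) (auto intro: sy)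
  qed
qed

lemma hnorm_Et: "hnorm C t = onorm (\<lambda>x. Et C t *v x)"
  by (simp add: hnorm_def Et_def)

lemma hnorm_nonneg: "0 \<le> hnorm C t"
  unfolding hnorm_Et by (rule onorm_pos_le) simp

lemma part1:
  fixes C :: "real^'n^'n"
  assumes sol: "tensor_ode_sol C m D" and t: "0 \<le> t"
  shows "frob m (D t) \<le> hnorm C t ^ m * frob m (D 0)"
proof -
  have eq: "D t xs = tp (Et C t) (D 0) xs" if xs: "length xs = m" for xs
  proof -
    have "(\<lambda>s ys. D s ys - tp (Et C s) (D 0) ys) t xs = 0"
    proof (rule uniq[where m=m and C=C and X="\<lambda>s ys. D s ys - tp (Et C s) (D 0) ys"])
      fix ys :: "'n list" and t :: real assume ys: "length ys = m" and t: "0 \<le> t"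
      have a: "((\<lambda>s. D s ys) has_real_derivative - Lop C (D t) ys) (at t within {0..})"
        by (rule ode_to_list[OF sol ys t])
      have b: "((\<lambda>s. tp (Et C s) (D 0) ys) has_real_derivative - Lop C (tp (Et C t) (D 0)) ys) (at t within {0..})"
        by (rule has_field_derivative_at_within, rule tp_deriv, rule Et_deriv)
      have "((\<lambda>s. D s ys - tp (Et C s) (D 0) ys) has_real_derivative
              (- Lop C (D t) ys) - (- Lop C (tp (Et C t) (D 0)) ys)) (at t within {0..})"
        by (rule DERIV_diff[OF a b])
      moreover have "(- Lop C (D t) ys) - (- Lop C (tp (Et C t) (D 0)) ys) =
          - Lop C (\<lambda>ys. D t ys - tp (Et C t) (D 0) ys) ys"
        by (simp add: Lop_diff)
      ultimately show "((\<lambda>s. (\<lambda>s ys. D s ys - tp (Et C s) (D 0) ys) s ys) has_real_derivative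
              - Lop C ((\<lambda>s ys. D s ys - tp (Et C s) (D 0) ys) t) ys) (at t within {0..})"
        by simp
    next
      fix ys :: "'n list" assume "length ys = m"
      show "(\<lambda>s ys. D s ys - tp (Et C s) (D 0) ys) 0 ys = 0"
        by (simp add: Et_0 tp_id)
    qed (use t xs in auto)
    then show ?thesis by simp
  qed
  have "frob m (D t) = frob m (tp (Et C t) (D 0))"
    unfolding frob_def by (rule arg_cong[where f=sqrt], rule sum.cong) (auto simp: eq)
  also have "\<dots> \<le> hnorm C t ^ m * frob m (D 0)"
    unfolding hnorm_Et by (rule frob_tp[OF hA_onorm]) (rule onorm_pos_le, simp)
  finally show ?thesis .
qed



definition Rv :: "real^'n^'n \<Rightarrow> nat \<Rightarrow> real^'n \<Rightarrow> real \<Rightarrow> 'n::finite list \<Rightarrow> real" where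
  "Rv C m v s xs = (if length xs = m then tp (Et C s) (\<lambda>ys. prod_list (map (\<lambda>y. v $ y) ys)) xs else 0)"

lemma Rv_form: "Rv C m v s xs = (if length xs = m then prod_list (map (\<lambda>x. (Et C s *v v) $ x) xs) else 0)"
  unfolding Rv_def tp_rank1 ..

lemma prod_perm:
  assumes e: "mset ys = mset zs"
  shows "prod_list (map (f::'a \<Rightarrow> real) ys) = prod_list (map f zs)"
proof -
  have a: "prod_list (map f xs) = prod_mset (image_mset f (mset xs))" for xs :: "'a list"
    by (simp only: prod_mset_prod_list[symmetric] mset_map)
  show ?thesis unfolding a e ..
qed

lemma Rv_sym: "Rv C m v s \<in> sym_tensors m"
  unfolding sym_tensors_def
proof (intro CollectI conjI allI impI)
  fix xs :: "'a list" assume "length xs \<noteq> m" then show "Rv C m v s xs = 0" by (simp add: Rv_def)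
next
  fix xs ys :: "'a list" assume l: "length xs = m" and e: "mset ys = mset xs"
  have "length ys = m" using l arg_cong[OF e, of size] by simp
  then show "Rv C m v s ys = Rv C m v s xs" unfolding Rv_form using l prod_perm[OF e] by simp
qed

lemma Rv_sol: "tensor_ode_sol C m (Rv C m v)"
proof (rule list_to_ode)
  fix s :: real show "Rv C m v s \<in> sym_tensors m" by (rule Rv_sym)
next
  fix xs :: "'a list" and t :: real assume xs: "length xs = m" and t: "0 \<le> t"
  let ?V = "\<lambda>ys. prod_list (map (\<lambda>y. v $ y) ys)"
  have "((\<lambda>s. tp (Et C s) ?V xs) has_real_derivative - Lop C (tp (Et C t) ?V) xs) (at t within {0..})"
    by (rule has_field_derivative_at_within, rule tp_deriv, rule Et_deriv)
  moreover have "(\<lambda>s. Rv C m v s xs) = (\<lambda>s. tp (Et C s) ?V xs)" using xs by (simp add: Rv_def)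
  moreover have "Lop C (tp (Et C t) ?V) xs = Lop C (Rv C m v t) xs"
    by (rule Lop_cong) (simp add: Rv_def xs)
  ultimately show "((\<lambda>s. Rv C m v s xs) has_real_derivative - Lop C (Rv C m v t) xs) (at t within {0..})"
    by simp
qed

lemma sq_prod: "(prod_list (map f xs))\<^sup>2 = prod_list (map (\<lambda>x. (f x)\<^sup>2) xs)" for f :: "'a \<Rightarrow> real"
  by (induction xs) (simp_all add: power_mult_distrib)

lemma Rv_frob: "frob m (Rv C m v s) = norm (Et C s *v v) ^ m"
proof -
  let ?w = "Et C s *v v"
  have "(\<Sum>xs\<in>{xs::'a list. length xs = m}. (Rv C m v s xs)\<^sup>2) =
        (\<Sum>xs\<in>{xs::'a list. length xs = m}. prod_list (map (\<lambda>x. (?w $ x)\<^sup>2) xs))"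
    by (rule sum.cong) (simp_all add: Rv_form sq_prod)
  also have "\<dots> = (\<Sum>x\<in>UNIV. (?w $ x)\<^sup>2)^m" by (rule sum_Lm_prod)
  also have "\<dots> = ((norm ?w)^m)\<^sup>2" by (simp add: norm_sq_vec[symmetric] power_mult[symmetric] mult.commute)
  finally show ?thesis unfolding frob_def by simp
qed

lemma Rv_frob0: "frob m (Rv C m v 0) = norm v ^ m"
  unfolding Rv_frob Et_0 by simp

lemma frob_zero: "frob m (\<lambda>_. 0) = 0"
  by (simp add: frob_def)

lemma part2:
  fixes C :: "real^'n^'n"
  assumes m: "m \<ge> 1" and t: "0 \<le> t"
  shows "Sup {frob m (D t) / frob m (D 0) | D. tensor_ode_sol C m D \<and> D 0 \<noteq> (\<lambda>_. 0)} = hnorm C t ^ m"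
proof (rule cSup_eq_non_empty)
  let ?S = "{frob m (D t) / frob m (D 0) | D. tensor_ode_sol C m D \<and> D 0 \<noteq> (\<lambda>_. 0)}"
  have elem: "(norm (Et C t *v v) / norm v)^m \<in> ?S" if v: "v \<noteq> 0" for v
  proof -
    have "frob m (Rv C m v 0) \<noteq> 0" using v by (simp add: Rv_frob0)
    then have "Rv C m v 0 \<noteq> (\<lambda>_. 0)" using frob_zero by metis
    moreover have "frob m (Rv C m v t) / frob m (Rv C m v 0) = (norm (Et C t *v v) / norm v)^m"
      by (simp only: Rv_frob0) (simp add: Rv_frob power_divide)
    ultimately show ?thesis using Rv_sol[of C m v] by (intro CollectI exI[of _ "Rv C m v"]) auto
  qed
  have one: "(1::real^'n) \<noteq> 0" by (simp add: vec_eq_iff)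
  show "?S \<noteq> {}" using elem[OF one] by blast
  show "x \<le> hnorm C t ^ m" if "x \<in> ?S" for x
  proof -
    obtain D where x: "x = frob m (D t) / frob m (D 0)" and sol: "tensor_ode_sol C m D"
      using \<open>x \<in> ?S\<close> by blast
    have le: "frob m (D t) \<le> hnorm C t ^ m * frob m (D 0)" by (rule part1[OF sol t])
    have f0: "0 \<le> frob m (D 0)" by (simp add: frob_def sum_nonneg)
    show ?thesis
    proof (cases "frob m (D 0) = 0")
      case True then show ?thesis using x hnorm_nonneg[of C t] by simp
    next
      case False then show ?thesis using x le f0 by (simp add: divide_le_eq)
    qed
  qed
  show "hnorm C t ^ m \<le> y" if ub: "\<And>x. x \<in> ?S \<Longrightarrow> x \<le> y" for y
  proof -
    have m0: "0 < m" using m by simp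
    have y0: "0 \<le> y" using ub[OF elem[OF one]] by (meson order_trans zero_le_divide_iff norm_ge_zero zero_le_power)
    have bnd: "norm (Et C t *v x) \<le> root m y * norm x" for x
    proof (cases "x = 0")
      case True then show ?thesis by simp
    next
      case False
      let ?a = "norm (Et C t *v x) / norm x"
      have a0: "0 \<le> ?a" by simp
      have "?a^m \<le> y" by (rule ub[OF elem[OF False]])
      then have "root m (?a^m) \<le> root m y" by (rule real_root_le_mono[OF m0])
      then have "?a \<le> root m y" using real_root_power_cancel[OF m0 a0] by simp
      then show ?thesis using False by (simp add: divide_le_eq)
    qed
    have "hnorm C t \<le> root m y"
      unfolding hnorm_Et by (rule onorm_bound[OF real_root_ge_zero[OF y0] bnd])
    then have "hnorm C t ^ m \<le> (root m y)^m" by (rule power_mono[OF _ hnorm_nonneg])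
    also have "\<dots> = y" using m0 y0 by simp
    finally show ?thesis .
  qed
qed

theorem theorem6p1:
  fixes C :: "real^'n^'n" and m :: nat
  assumes "conditionA C" and "m \<ge> 1"
  shows "(\<forall>D t. tensor_ode_sol C m D \<longrightarrow> t \<ge> 0 \<longrightarrow>
            frob m (D t) \<le> hnorm C t ^ m * frob m (D 0)) \<and>
         (\<forall>t\<ge>0. Sup {frob m (D t) / frob m (D 0) | D.
                      tensor_ode_sol C m D \<and> D 0 \<noteq> (\<lambda>_. 0)} = hnorm C t ^ m)"
proof (intro conjI allI impI)
  fix D and t :: real
  assume "tensor_ode_sol C m D" "t \<ge> 0"
  then show "frob m (D t) \<le> hnorm C t ^ m * frob m (D 0)" by (rule part1)
next
  fix t :: real assume "0 \<le> t"
  then show "Sup {frob m (D t) / frob m (D 0) | D.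
                      tensor_ode_sol C m D \<and> D 0 \<noteq> (\<lambda>_. 0)} = hnorm C t ^ m"
    by (rule part2[OF assms(2)])
qed

end
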